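(* For $i\geq 1$ let $\mathcal B_i$ be the (non-unital) $*$-algebra generated by $A_i$ and $A_i^\dagger$, i.e. the set of non-commutative polynomials without constant term in $A_i,A_i^\dagger$. Let $\mathcal B$ be the algebra of all bounded operators on $\mathfrak F_{WM}(\mathcal H)$ and $\omega_\Omega(X)=\langle\Omega,X\Omega\rangle$ the vacuum state. Then the algebras $\{\mathcal B_i\}_{i\ge1}$ are monotone independent in $(\mathcal B,\omega_\Omega)$, namely: (M1) if $i<j>k$ are indices and $p_i\in\mathcal B_i$, $p_j\in\mathcal B_j$, $p_k\in\mathcal B_k$, then $p_ip_jp_k=\omega_\Omega(p_j)\,p_ip_k$; (M2) if $j_1>j_2>\cdots>j_k<j_{k+1}<\cdots<j_n$ and $p_{j_m}\in\mathcal B_{j_m}$ for $m=1,\dots,n$, then $\omega_\Omega(p_{j_1}\cdots p_{j_n})=\prod_{m=1}^n\omega_\Omega(p_{j_m})$.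
   Context: Let $\mathcal H$ be a separable Hilbert space with a fixed orthonormal basis $\{e_i: i\geq 1\}$, and $\mathfrak F(\mathcal H)=\bigoplus_{n\ge 0}\mathcal H^{\otimes n}$ its full Fock space with vacuum vector $\Omega$. The weakly monotone Fock space $\mathfrak F_{WM}(\mathcal H)$ is the closed subspace of $\mathfrak F(\mathcal H)$ spanned by $\Omega$ and all simple tensors $e_{i_k}\otimes e_{i_{k-1}}\otimes\cdots\otimes e_{i_1}$ with $k\geq 1$ and $i_k\geq i_{k-1}\geq\cdots\geq i_1$. For $i\geq1$ the weakly monotone annihilation operator $A_i$ and creation operator $A_i^\dagger$ are the bounded operators on $\mathfrak F_{WM}(\mathcal H)$ defined on this spanning set by $A_i\Omega=0$, $A_i(e_{i_k}\otimes\cdots\otimes e_{i_1})=\delta_{i,i_k}\, e_{i_{k-1}}\otimes\cdots\otimes e_{i_1}$ (interpreted as $\delta_{i,i_1}\Omega$ when $k=1$), $A_i^\dagger\Omega=e_i$, and $A_i^\dagger(e_{i_k}\otimes\cdots\otimes e_{i_1})=e_i\otimes e_{i_k}\otimes\cdots\otimes e_{i_1}$ if $i\geq i_k$ and $=0$ if $i<i_k$. They are mutually adjoint, of norm one. *)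

theory Defs
  imports Complex_Main
begin

text \<open>Basis of the weakly monotone Fock space: lists [i_k, ..., i_1] with
  i_k \<ge> ... \<ge> i_1 \<ge> 1 (head = leftmost tensor factor); [] is the vacuum.\<close>

type_synonym vec = "nat list \<Rightarrow> complex"
type_synonym op = "vec \<Rightarrow> vec"

definition wm_valid :: "nat list \<Rightarrow> bool" where
  "wm_valid w \<longleftrightarrow> sorted_wrt (\<ge>) w \<and> (\<forall>x\<in>set w. 1 \<le> x)"

text \<open>Algebraic (finitely supported) weakly monotone Fock space: dense in F_WM.\<close>
definition fock0 :: "vec set" where
  "fock0 = {f. finite {w. f w \<noteq> 0} \<and> (\<forall>w. f w \<noteq> 0 \<longrightarrow> wm_valid w)}"

definition vacuum :: vec where
  "vacuum = (\<lambda>w. if w = [] then 1 else 0)"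

text \<open>Annihilation: A_i e_{i # w} = e_w, A_i e_v = 0 otherwise.\<close>
definition ann :: "nat \<Rightarrow> op" where
  "ann i f = (\<lambda>w. if wm_valid w \<and> wm_valid (i # w) then f (i # w) else 0)"

text \<open>Creation: A_i^dagger e_w = e_{i # w} if i \<ge> head w, 0 otherwise.\<close>
definition cre :: "nat \<Rightarrow> op" where
  "cre i f = (\<lambda>v. if wm_valid v \<and> v \<noteq> [] \<and> hd v = i then f (tl v) else 0)"

definition omega :: "op \<Rightarrow> complex" where
  "omega X = X vacuum []"

inductive_set alg :: "nat \<Rightarrow> op set" for i :: nat where
  gen_ann: "ann i \<in> alg i"
| gen_cre: "cre i \<in> alg i"
| add: "p \<in> alg i \<Longrightarrow> q \<in> alg i \<Longrightarrow> (\<lambda>f w. p f w + q f w) \<in> alg i"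
| smult: "p \<in> alg i \<Longrightarrow> (\<lambda>f w. c * p f w) \<in> alg i"
| mult: "p \<in> alg i \<Longrightarrow> q \<in> alg i \<Longrightarrow> p \<circ> q \<in> alg i"

end

theory Submission
  imports Defs
begin

definition Emb :: "nat \<Rightarrow> (nat \<Rightarrow> nat list \<Rightarrow> complex) \<Rightarrow> vec" where
  "Emb j G v = (if wm_valid v \<and> (dropWhile (\<lambda>x. x = j) v = [] \<or> hd (dropWhile (\<lambda>x. x = j) v) < j)
     then G (length (takeWhile (\<lambda>x. x = j) v)) (dropWhile (\<lambda>x. x = j) v) else 0)"

lemma valid_cons: "wm_valid (x # v) \<longleftrightarrow> wm_valid v \<and> 1 \<le> x \<and> (\<forall>y\<in>set v. y \<le> x)"
  by (auto simp: wm_valid_def)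

lemma valid_Nil[simp]: "wm_valid []"
  by (simp add: wm_valid_def)

lemma cond_le:
  assumes "wm_valid v" "dropWhile (\<lambda>x. x = j) v = [] \<or> hd (dropWhile (\<lambda>x. x = j) v) < j"
  shows "\<forall>y\<in>set v. y \<le> j"
proof (cases v)
  case Nil then show ?thesis by simp
next
  case (Cons x u)
  show ?thesis
  proof (cases "x = j")
    case True
    then show ?thesis using assms(1) Cons by (auto simp: valid_cons)
  next
    case False
    then have "x < j" using assms(2) Cons by auto
    then show ?thesis using assms(1) Cons by (auto simp: valid_cons)
  qed
qed

lemma ann_emb:
  assumes "1 \<le> j"
  shows "ann j (Emb j G) = Emb j (\<lambda>n w. G (Suc n) w)"
proof
  fix v
  show "ann j (Emb j G) v = Emb j (\<lambda>n w. G (Suc n) w) v"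
  proof (cases "wm_valid v \<and> (dropWhile (\<lambda>x. x = j) v = [] \<or> hd (dropWhile (\<lambda>x. x = j) v) < j)")
    case True
    then have "wm_valid (j # v)" using cond_le[of v j] assms by (auto simp: valid_cons)
    then show ?thesis using True by (simp add: ann_def Emb_def)
  next
    case False
    then show ?thesis by (auto simp: ann_def Emb_def valid_cons)
  qed
qed

lemma cre_emb:
  shows "cre j (Emb j G) = Emb j (\<lambda>n w. if n = 0 then 0 else G (n - 1) w)"
proof
  fix v
  show "cre j (Emb j G) v = Emb j (\<lambda>n w. if n = 0 then 0 else G (n - 1) w) v"
  proof (cases v)
    case Nil then show ?thesis by (simp add: cre_def Emb_def)
  next
    case (Cons x u)
    show ?thesis
    proof (cases "x = j")
      case True
      then show ?thesis using Cons by (auto simp: cre_def Emb_def valid_cons)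
    next
      case False
      then show ?thesis using Cons by (auto simp: cre_def Emb_def)
    qed
  qed
qed

lemma emb_add: "(\<lambda>v. Emb j A v + Emb j B v) = Emb j (\<lambda>n w. A n w + B n w)"
  by (auto simp: Emb_def fun_eq_iff)

lemma emb_smult: "(\<lambda>v. c * Emb j A v) = Emb j (\<lambda>n w. c * A n w)"
  by (auto simp: Emb_def fun_eq_iff)

lemma alg_emb:
  assumes "p \<in> alg j" "1 \<le> j"
  shows "\<exists>P. (\<forall>c a. P (\<lambda>m. c * a m) = (\<lambda>n. c * P a n)) \<and>
             (\<forall>G. p (Emb j G) = Emb j (\<lambda>n w. P (\<lambda>m. G m w) n))"
  using assms(1)
proof induction
  case gen_ann
  show ?case
    using ann_emb[OF assms(2)] by (intro exI[of _ "\<lambda>a n. a (Suc n)"]) auto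
next
  case gen_cre
  show ?case
    by (rule exI[of _ "\<lambda>a n. if n = 0 then 0 else a (n - 1)"]) (auto simp: cre_emb)
next
  case (add p q)
  then obtain P Q where P: "\<forall>c a. P (\<lambda>m. c * a m) = (\<lambda>n. c * P a n)"
     "\<forall>G. p (Emb j G) = Emb j (\<lambda>n w. P (\<lambda>m. G m w) n)"
    and Q: "\<forall>c a. Q (\<lambda>m. c * a m) = (\<lambda>n. c * Q a n)"
     "\<forall>G. q (Emb j G) = Emb j (\<lambda>n w. Q (\<lambda>m. G m w) n)" by blast
  show ?case
    apply (rule exI[of _ "\<lambda>a n. P a n + Q a n"])
    using P Q by (auto simp: emb_add distrib_left)
next
  case (smult p c)
  then obtain P where P: "\<forall>c a. P (\<lambda>m. c * a m) = (\<lambda>n. c * P a n)"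
     "\<forall>G. p (Emb j G) = Emb j (\<lambda>n w. P (\<lambda>m. G m w) n)" by blast
  show ?case
    apply (rule exI[of _ "\<lambda>a n. c * P a n"])
    using P by (auto simp: emb_smult mult.left_commute)
next
  case (mult p q)
  then obtain P Q where P: "\<forall>c a. P (\<lambda>m. c * a m) = (\<lambda>n. c * P a n)"
     "\<forall>G. p (Emb j G) = Emb j (\<lambda>n w. P (\<lambda>m. G m w) n)"
    and Q: "\<forall>c a. Q (\<lambda>m. c * a m) = (\<lambda>n. c * Q a n)"
     "\<forall>G. q (Emb j G) = Emb j (\<lambda>n w. Q (\<lambda>m. G m w) n)" by blast
  show ?case
    apply (rule exI[of _ "\<lambda>a. P (Q a)"])
    using P Q by auto
qed

lemma alg_hom: "p \<in> alg i \<Longrightarrow> p (\<lambda>w. c * f w) = (\<lambda>w. c * p f w)"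
proof (induction arbitrary: c f rule: alg.induct)
  case (smult p d)
  then show ?case by (simp add: mult.left_commute)
next
  case (add p q)
  then show ?case by (simp add: distrib_left)
qed (auto simp: ann_def cre_def)

lemma alg_zero: "p \<in> alg i \<Longrightarrow> p (\<lambda>w. 0) = (\<lambda>w. 0)"
  using alg_hom[of p i 0 "\<lambda>w. 0"] by simp

lemma alg_add: "p \<in> alg i \<Longrightarrow> p (\<lambda>w. f w + g w) = (\<lambda>w. p f w + p g w)"
proof (induction arbitrary: f g rule: alg.induct)
  case (smult p d)
  then show ?case by (simp add: distrib_left)
next
  case (add p q)
  then show ?case by (simp add: algebra_simps)
qed (auto simp: ann_def cre_def)

lemma alg_supp: "p \<in> alg k \<Longrightarrow> p f v \<noteq> 0 \<Longrightarrow> wm_valid v \<and> (v = [] \<or> hd v \<le> k)"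
proof (induction arbitrary: f v rule: alg.induct)
  case gen_ann
  then show ?case by (cases v) (auto simp: ann_def valid_cons split: if_splits)
next
  case gen_cre
  then show ?case by (auto simp: cre_def split: if_splits)
next
  case (add p q)
  then show ?case by (metis add.right_neutral)
next
  case (smult p c)
  then show ?case by (metis mult_zero_right)
next
  case (mult p q)
  then show ?case by fastforce
qed

lemma alg_kill: "p \<in> alg i \<Longrightarrow> (\<forall>v. h v \<noteq> 0 \<longrightarrow> v \<noteq> [] \<and> hd v > i) \<Longrightarrow> p h = (\<lambda>w. 0)"
proof (induction arbitrary: h rule: alg.induct)
  case gen_ann
  then show ?case by (fastforce simp: ann_def fun_eq_iff)
next
  case gen_cre
  show ?case
  proof
    fix v
    show "cre i h v = 0"
    proof (cases "wm_valid v \<and> v \<noteq> [] \<and> hd v = i")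
      case True
      then obtain u where u: "v = i # u" by (cases v) auto
      have "h u = 0"
      proof (rule ccontr)
        assume "h u \<noteq> 0"
        then have "u \<noteq> [] \<and> hd u > i" using gen_cre by blast
        then show False using True u by (cases u) (auto simp: valid_cons)
      qed
      then show ?thesis using u by (simp add: cre_def)
    qed (auto simp: cre_def)
  qed
next
  case (add p q)
  then show ?case by simp
next
  case (smult p c)
  then show ?case by simp
next
  case (mult p q)
  then show ?case by (simp add: alg_zero)
qed

lemma emb_G0:
  assumes "\<forall>v. g v \<noteq> 0 \<longrightarrow> wm_valid v \<and> (v = [] \<or> hd v < j)"
  shows "g = Emb j (\<lambda>n w. if n = 0 then g w else 0)"
proof
  fix v
  show "g v = Emb j (\<lambda>n w. if n = 0 then g w else 0) v"
  proof (cases "g v = 0")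
    case True
    then show ?thesis by (cases v) (auto simp: Emb_def)
  next
    case False
    then have "wm_valid v \<and> (v = [] \<or> hd v < j)" using assms by blast
    then show ?thesis by (cases v) (auto simp: Emb_def)
  qed
qed

lemma vac_supp: "\<forall>v. vacuum v \<noteq> 0 \<longrightarrow> wm_valid v \<and> (v = [] \<or> hd v < j)"
  by (simp add: vacuum_def)


lemma key2:
  assumes "p \<in> alg j" "1 \<le> j" "\<forall>v. g v \<noteq> 0 \<longrightarrow> wm_valid v \<and> (v = [] \<or> hd v < j)"
  shows "\<exists>d. d 0 = omega p \<and> p g = Emb j (\<lambda>n w. g w * d n)"
proof -
  obtain P where P: "\<forall>c a. P (\<lambda>m. c * a m) = (\<lambda>n. c * P a n)"
     "\<forall>G. p (Emb j G) = Emb j (\<lambda>n w. P (\<lambda>m. G m w) n)"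
    using alg_emb[OF assms(1,2)] by blast
  define \<delta> where "\<delta> = (\<lambda>m::nat. if m = 0 then (1::complex) else 0)"
  have h: "(\<lambda>m. if m = 0 then c else 0) = (\<lambda>m. c * \<delta> m)" for c :: complex
    by (auto simp: \<delta>_def)
  have pg: "p f = Emb j (\<lambda>n w. f w * P \<delta> n)"
    if "\<forall>v. f v \<noteq> 0 \<longrightarrow> wm_valid v \<and> (v = [] \<or> hd v < j)" for f
  proof -
    have "p f = p (Emb j (\<lambda>n w. if n = 0 then f w else 0))"
      using emb_G0[OF that] by simp
    also have "\<dots> = Emb j (\<lambda>n w. P (\<lambda>m. if m = 0 then f w else 0) n)" using P(2) by simp
    also have "\<dots> = Emb j (\<lambda>n w. f w * P \<delta> n)" unfolding h using P(1) by simp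
    finally show ?thesis .
  qed
  have "omega p = P \<delta> 0"
    unfolding omega_def pg[OF vac_supp] by (simp add: Emb_def vacuum_def)
  then show ?thesis using pg[OF assms(3)] by (intro exI[of _ "P \<delta>"]) simp
qed

lemma lemmaA:
  assumes "p \<in> alg j" "1 \<le> j" "\<forall>v. g v \<noteq> 0 \<longrightarrow> wm_valid v \<and> (v = [] \<or> hd v < j)"
  shows "p g [] = omega p * g []"
  using key2[OF assms] by (auto simp: Emb_def)

lemma lemmaC:
  assumes "p \<in> alg i" "q \<in> alg j" "1 \<le> i" "i < j"
    "\<forall>v. g v \<noteq> 0 \<longrightarrow> wm_valid v \<and> (v = [] \<or> hd v < j)"
  shows "p (q g) = (\<lambda>w. omega q * p g w)"
proof -
  have j1: "1 \<le> j" using assms by simp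
  obtain d where d: "d 0 = omega q" "q g = Emb j (\<lambda>n w. g w * d n)"
    using key2[OF assms(2) j1 assms(5)] by blast
  define r where "r = Emb j (\<lambda>n w. if n = 0 then 0 else g w * d n)"
  define G0 where "G0 = (\<lambda>(n::nat) w. if n = 0 then g w else (0::complex))"
  have g0: "Emb j G0 = g" using emb_G0[OF assms(5)] unfolding G0_def by simp
  have e1: "(\<lambda>v. omega q * g v) = Emb j (\<lambda>n w. omega q * G0 n w)"
  proof -
    have "(\<lambda>v. omega q * g v) = (\<lambda>v. omega q * Emb j G0 v)" unfolding g0 ..
    also have "\<dots> = Emb j (\<lambda>n w. omega q * G0 n w)" by (rule emb_smult)
    finally show ?thesis .
  qed
  have "q g = (\<lambda>v. omega q * g v + r v)"
  proof -
    have "(\<lambda>v. omega q * g v + r v) =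
      (\<lambda>v. Emb j (\<lambda>n w. omega q * G0 n w) v + r v)"
      by (simp only: e1[symmetric])
    also have "\<dots> = Emb j (\<lambda>n w. g w * d n)"
      unfolding r_def emb_add using d(1) by (intro arg_cong[where f="Emb j"]) (auto simp: fun_eq_iff G0_def)
    finally show ?thesis using d(2) by simp
  qed
  moreover have "p r = (\<lambda>w. 0)"
  proof (rule alg_kill[OF assms(1)], intro allI impI)
    fix v assume "r v \<noteq> 0"
    then have *: "wm_valid v" "takeWhile (\<lambda>x. x = j) v \<noteq> []"
      by (auto simp: r_def Emb_def split: if_splits)
    then show "v \<noteq> [] \<and> i < hd v" using assms(4) by (cases v) (auto split: if_splits)
  qed
  ultimately show ?thesis
    using alg_add[OF assms(1)] alg_hom[OF assms(1)] by simp
qed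

lemma foldr_supp:
  "length ps = length js \<Longrightarrow> ps \<noteq> [] \<Longrightarrow> (\<forall>m<length js. ps ! m \<in> alg (js ! m)) \<Longrightarrow>
   foldr (\<circ>) ps id f v \<noteq> 0 \<Longrightarrow> wm_valid v \<and> (v = [] \<or> hd v \<le> js ! 0)"
proof -
  assume a: "length ps = length js" "ps \<noteq> []" "\<forall>m<length js. ps ! m \<in> alg (js ! m)"
    "foldr (\<circ>) ps id f v \<noteq> 0"
  obtain p ps' where ps: "ps = p # ps'" using a by (cases ps) auto
  have "p \<in> alg (js ! 0)" using a(3)[rule_format, of 0] a(1) ps by (cases js) auto
  moreover have "p (foldr (\<circ>) ps' id f) v \<noteq> 0" using a ps by simp
  ultimately show ?thesis by (rule alg_supp)
qed

lemma lemmaD: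
  "length ps = length js \<Longrightarrow> 1 \<le> j0 \<Longrightarrow> p0 \<in> alg j0 \<Longrightarrow>
   (\<forall>m<length js. 1 \<le> js ! m \<and> ps ! m \<in> alg (js ! m)) \<Longrightarrow>
   (\<forall>m. m + 1 < length (j0 # js) \<longrightarrow> (j0 # js) ! m < (j0 # js) ! (m + 1)) \<Longrightarrow>
   foldr (\<circ>) (p0 # ps) id vacuum = (\<lambda>w. (\<Prod>m<length ps. omega (ps ! m)) * p0 vacuum w)"
proof (induction ps arbitrary: p0 j0 js)
  case Nil
  then show ?case by simp
next
  case (Cons p1 ps)
  obtain j1 js' where js: "js = j1 # js'" using Cons.prems(1) by (cases js) auto
  have j1: "1 \<le> j1" "p1 \<in> alg j1" using Cons.prems(4) js by auto
  have lt: "j0 < j1" using Cons.prems(5)[rule_format, of 0] js by simp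
  have IH: "foldr (\<circ>) (p1 # ps) id vacuum = (\<lambda>w. (\<Prod>m<length ps. omega (ps ! m)) * p1 vacuum w)"
  proof (rule Cons.IH[of js' j1 p1])
    show "length ps = length js'" using Cons.prems(1) js by simp
    show "1 \<le> j1" "p1 \<in> alg j1" by (rule j1)+
    show "\<forall>m<length js'. 1 \<le> js' ! m \<and> ps ! m \<in> alg (js' ! m)"
    proof (intro allI impI)
      fix m assume "m < length js'"
      then show "1 \<le> js' ! m \<and> ps ! m \<in> alg (js' ! m)"
        using Cons.prems(4)[rule_format, of "Suc m"] js by simp
    qed
    show "\<forall>m. m + 1 < length (j1 # js') \<longrightarrow> (j1 # js') ! m < (j1 # js') ! (m + 1)"
    proof (intro allI impI)
      fix m assume "m + 1 < length (j1 # js')"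
      then show "(j1 # js') ! m < (j1 # js') ! (m + 1)"
        using Cons.prems(5)[rule_format, of "Suc m"] js by simp
    qed
  qed
  have "foldr (\<circ>) (p0 # p1 # ps) id vacuum = p0 (foldr (\<circ>) (p1 # ps) id vacuum)" by simp
  also have "\<dots> = (\<lambda>w. (\<Prod>m<length ps. omega (ps ! m)) * p0 (p1 vacuum) w)"
    unfolding IH using alg_hom[OF Cons.prems(3)] by simp
  also have "\<dots> = (\<lambda>w. (\<Prod>m<length ps. omega (ps ! m)) * (omega p1 * p0 vacuum w))"
    using lemmaC[OF Cons.prems(3) j1(2) Cons.prems(2) lt vac_supp] by simp
  also have "\<dots> = (\<lambda>w. (\<Prod>m<length (p1 # ps). omega ((p1 # ps) ! m)) * p0 vacuum w)"
    unfolding length_Cons prod.lessThan_Suc_shift by (simp add: mult_ac)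
  finally show ?case .
qed

lemma M2:
  "length ps = length js \<and> k < length js \<and> (\<forall>m<length js. 1 \<le> js ! m) \<and>
        (\<forall>m. m < k \<longrightarrow> js ! m > js ! (m + 1)) \<and>
        (\<forall>m. k \<le> m \<and> m + 1 < length js \<longrightarrow> js ! m < js ! (m + 1)) \<and>
        (\<forall>m<length js. ps ! m \<in> alg (js ! m)) \<Longrightarrow>
        omega (foldr (\<circ>) ps id) = (\<Prod>m<length js. omega (ps ! m))"
proof (induction k arbitrary: ps js)
  case 0
  then have A: "length ps = length js" "0 < length js" "\<forall>m<length js. 1 \<le> js ! m"
     "\<forall>m. m + 1 < length js \<longrightarrow> js ! m < js ! (m + 1)"
     "\<forall>m<length js. ps ! m \<in> alg (js ! m)" by auto
  obtain j0 js' where js: "js = j0 # js'" using A by (cases js) auto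
  obtain p0 ps' where ps: "ps = p0 # ps'" using A js by (cases ps) auto
  have "foldr (\<circ>) (p0 # ps') id vacuum = (\<lambda>w. (\<Prod>m<length ps'. omega (ps' ! m)) * p0 vacuum w)"
  proof (rule lemmaD[of ps' js' j0])
    show "length ps' = length js'" using A(1) js ps by simp
    show "1 \<le> j0" using A(3)[rule_format, of 0] js by simp
    show "p0 \<in> alg j0" using A(5)[rule_format, of 0] js ps by simp
    show "\<forall>m<length js'. 1 \<le> js' ! m \<and> ps' ! m \<in> alg (js' ! m)"
    proof (intro allI impI)
      fix m assume "m < length js'"
      then show "1 \<le> js' ! m \<and> ps' ! m \<in> alg (js' ! m)"
        using A(3)[rule_format, of "Suc m"] A(5)[rule_format, of "Suc m"] js ps by simp
    qed
    show "\<forall>m. m + 1 < length (j0 # js') \<longrightarrow> (j0 # js') ! m < (j0 # js') ! (m + 1)"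
      using A(4) js by simp
  qed
  then have "omega (foldr (\<circ>) ps id) = (\<Prod>m<length ps'. omega (ps' ! m)) * omega p0"
    using ps by (simp add: omega_def)
  also have "\<dots> = (\<Prod>m<length js. omega (ps ! m))"
    using A(1) unfolding js ps length_Cons prod.lessThan_Suc_shift by (simp add: mult_ac)
  finally show ?case .
next
  case (Suc k)
  then have A: "length ps = length js" "Suc k < length js" "\<forall>m<length js. 1 \<le> js ! m"
     "\<forall>m. m < Suc k \<longrightarrow> js ! m > js ! (m + 1)"
     "\<forall>m. Suc k \<le> m \<and> m + 1 < length js \<longrightarrow> js ! m < js ! (m + 1)"
     "\<forall>m<length js. ps ! m \<in> alg (js ! m)" by auto
  obtain j0 js' where js: "js = j0 # js'" using A by (cases js) auto
  obtain p0 ps' where ps: "ps = p0 # ps'" using A js by (cases ps) auto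
  have ne: "ps' \<noteq> []" using A(1,2) js ps by auto
  have lt: "js' ! 0 < j0" using A(4)[rule_format, of 0] js by simp
  have p0: "p0 \<in> alg j0" "1 \<le> j0"
    using A(6)[rule_format, of 0] A(3)[rule_format, of 0] js ps by auto
  have pr: "\<forall>m<length js'. ps' ! m \<in> alg (js' ! m)"
  proof (intro allI impI)
    fix m assume "m < length js'"
    then show "ps' ! m \<in> alg (js' ! m)" using A(6)[rule_format, of "Suc m"] js ps by simp
  qed
  have IH: "omega (foldr (\<circ>) ps' id) = (\<Prod>m<length js'. omega (ps' ! m))"
  proof (rule Suc.IH, intro conjI)
    show "length ps' = length js'" using A(1) js ps by simp
    show "k < length js'" using A(2) js by simp
    show "\<forall>m<length js'. 1 \<le> js' ! m"
    proof (intro allI impI)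
      fix m assume "m < length js'"
      then show "1 \<le> js' ! m" using A(3)[rule_format, of "Suc m"] js by simp
    qed
    show "\<forall>m. m < k \<longrightarrow> js' ! (m + 1) < js' ! m"
    proof (intro allI impI)
      fix m assume "m < k"
      then show "js' ! (m + 1) < js' ! m" using A(4)[rule_format, of "Suc m"] js by simp
    qed
    show "\<forall>m. k \<le> m \<and> m + 1 < length js' \<longrightarrow> js' ! m < js' ! (m + 1)"
    proof (intro allI impI)
      fix m assume "k \<le> m \<and> m + 1 < length js'"
      then show "js' ! m < js' ! (m + 1)" using A(5)[rule_format, of "Suc m"] js by simp
    qed
    show "\<forall>m<length js'. ps' ! m \<in> alg (js' ! m)" by (rule pr)
  qed
  have len: "length ps' = length js'" using A(1) js ps by simp
  have supp: "\<forall>v. foldr (\<circ>) ps' id vacuum v \<noteq> 0 \<longrightarrow> wm_valid v \<and> (v = [] \<or> hd v < j0)"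
    using foldr_supp[OF len ne pr, of vacuum] lt by fastforce
  have "omega (foldr (\<circ>) ps id) = p0 (foldr (\<circ>) ps' id vacuum) []"
    using ps by (simp add: omega_def)
  also have "\<dots> = omega p0 * omega (foldr (\<circ>) ps' id)"
    using lemmaA[OF p0 supp] by (simp add: omega_def)
  also have "\<dots> = (\<Prod>m<length js. omega (ps ! m))"
    using IH len unfolding js ps length_Cons prod.lessThan_Suc_shift by simp
  finally show ?case .
qed

theorem theorem2p2:
  shows
   "(\<forall>i j k pi pj pk. 1 \<le> i \<and> 1 \<le> k \<and> i < j \<and> k < j \<and>
        pi \<in> alg i \<and> pj \<in> alg j \<and> pk \<in> alg k \<longrightarrow>
        (\<forall>f\<in>fock0. pi (pj (pk f)) = (\<lambda>w. omega pj * pi (pk f) w)))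
    \<and>
    (\<forall>(js :: nat list) (ps :: op list) (k :: nat).
        length ps = length js \<and> k < length js \<and> (\<forall>m<length js. 1 \<le> js ! m) \<and>
        (\<forall>m. m < k \<longrightarrow> js ! m > js ! (m + 1)) \<and>
        (\<forall>m. k \<le> m \<and> m + 1 < length js \<longrightarrow> js ! m < js ! (m + 1)) \<and>
        (\<forall>m<length js. ps ! m \<in> alg (js ! m)) \<longrightarrow>
        omega (foldr (\<circ>) ps id) = (\<Prod>m<length js. omega (ps ! m)))"
proof (intro conjI allI impI ballI)
  fix i j k pi pj pk f
  assume a: "1 \<le> i \<and> 1 \<le> k \<and> i < j \<and> k < j \<and> pi \<in> alg i \<and> pj \<in> alg j \<and> pk \<in> alg k"
  have "\<forall>v. pk f v \<noteq> 0 \<longrightarrow> wm_valid v \<and> (v = [] \<or> hd v < j)"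
    using alg_supp[of pk k f] a by fastforce
  then show "pi (pj (pk f)) = (\<lambda>w. omega pj * pi (pk f) w)"
    using lemmaC[of pi i pj j] a by blast
next
  fix js ps k
  assume "length ps = length js \<and> k < length js \<and> (\<forall>m<length js. 1 \<le> js ! m) \<and>
        (\<forall>m. m < k \<longrightarrow> js ! m > js ! (m + 1)) \<and>
        (\<forall>m. k \<le> m \<and> m + 1 < length js \<longrightarrow> js ! m < js ! (m + 1)) \<and>
        (\<forall>m<length js. ps ! m \<in> alg (js ! m))"
  then show "omega (foldr (\<circ>) ps id) = (\<Prod>m<length js. omega (ps ! m))" by (rule M2)
qed

end
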